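(* Suppose $p_{XY}$ has full support on $\mathcal{X}\times\mathcal{Y}$ and there exists a joint p.m.f. $p(u,x,y,z)=p_{XY}(x,y)p_{Z|XY}(z|x,y)p(u|x,y,z)$ (with $U$ on a finite set) satisfying the Markov chains $U-X-Y$, $Z-(U,Y)-X$ and $U-(Y,Z)-X$. Then for all $y,y'\in\mathcal{Y}$, $k(y)=k(y')$ and $\{\vec\alpha_1^{(y)},\dots,\vec\alpha_{k(y)}^{(y)}\}=\{\vec\alpha_1^{(y')},\dots,\vec\alpha_{k(y')}^{(y')}\}$.
   Context: $\mathcal{X},\mathcal{Y},\mathcal{Z}$ are finite. For $y\in\mathcal{Y}$ let $\mathcal{Z}^{(y)}=\{z\in\mathcal{Z}:\exists x,\ p_{Z|XY}(z|x,y)>0\}$. For $z,z'\in\mathcal{Z}^{(y)}$, write $z\equiv_y z'$ if the column vectors $(p_{Z|XY}(z|x,y))_{x\in\mathcal{X}}$ and $(p_{Z|XY}(z'|x,y))_{x\in\mathcal{X}}$ are positive scalar multiples of each other; this is an equivalence relation partitioning $\mathcal{Z}^{(y)}=\mathcal{Z}_1^{(y)}\uplus\cdots\uplus\mathcal{Z}_{k(y)}^{(y)}$. For each class, the $|\mathcal{X}|\times|\mathcal{Z}_i^{(y)}|$ matrix $A_i^{(y)}(x,z)=p_{Z|XY}(z|x,y)$ is rank one and can be uniquely written as $A_i^{(y)}(x,z)=\vec\alpha_i^{(y)}(x)\vec\gamma_i^{(y)}(z)$ with $\vec\alpha_i^{(y)}$ a probability vector on $\mathcal{X}$. *)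

theory Defs
  imports Complex_Main
begin

text \<open>Finite alphabets are modelled by finite types. The channel p_{Z|XY} is W x y z.\<close>

definition Zsupp :: "('x::finite \<Rightarrow> 'y \<Rightarrow> 'z::finite \<Rightarrow> real) \<Rightarrow> 'y \<Rightarrow> 'z set" where
  "Zsupp W y = {z. \<exists>x. W x y z > 0}"

definition zequiv :: "('x::finite \<Rightarrow> 'y \<Rightarrow> 'z::finite \<Rightarrow> real) \<Rightarrow> 'y \<Rightarrow> ('z \<times> 'z) set" where
  "zequiv W y = {(z, z'). z \<in> Zsupp W y \<and> z' \<in> Zsupp W y \<and>
                   (\<exists>c>0. \<forall>x. W x y z = c * W x y z')}"

definition zclasses :: "('x::finite \<Rightarrow> 'y \<Rightarrow> 'z::finite \<Rightarrow> real) \<Rightarrow> 'y \<Rightarrow> 'z set set" where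
  "zclasses W y = Zsupp W y // zequiv W y"

definition kcount :: "('x::finite \<Rightarrow> 'y \<Rightarrow> 'z::finite \<Rightarrow> real) \<Rightarrow> 'y \<Rightarrow> nat" where
  "kcount W y = card (zclasses W y)"

definition prob_vec :: "('a::finite \<Rightarrow> real) \<Rightarrow> bool" where
  "prob_vec a \<longleftrightarrow> (\<forall>x. a x \<ge> 0) \<and> (\<Sum>x\<in>UNIV. a x) = 1"

definition alpha_of :: "('x::finite \<Rightarrow> 'y \<Rightarrow> 'z::finite \<Rightarrow> real) \<Rightarrow> 'y \<Rightarrow> 'z set \<Rightarrow> ('x \<Rightarrow> real)" where
  "alpha_of W y C = (THE a. prob_vec a \<and> (\<exists>g :: 'z \<Rightarrow> real. \<forall>x. \<forall>z\<in>C. W x y z = a x * g z))"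

definition alphas :: "('x::finite \<Rightarrow> 'y \<Rightarrow> 'z::finite \<Rightarrow> real) \<Rightarrow> 'y \<Rightarrow> ('x \<Rightarrow> real) set" where
  "alphas W y = alpha_of W y ` zclasses W y"

definition joint :: "('x \<Rightarrow> 'y \<Rightarrow> real) \<Rightarrow> ('x \<Rightarrow> 'y \<Rightarrow> 'z \<Rightarrow> real) \<Rightarrow> ('x \<Rightarrow> 'y \<Rightarrow> 'z \<Rightarrow> 'u \<Rightarrow> real)
    \<Rightarrow> 'u \<Rightarrow> 'x \<Rightarrow> 'y \<Rightarrow> 'z \<Rightarrow> real" where
  "joint pXY W Q u x y z = pXY x y * W x y z * Q x y z u"

text \<open>Markov chain A - B - C for a pmf P(a,b,c) on finite sets:
  p(a,b,c) p(b) = p(a,b) p(b,c) for all a b c.\<close>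
definition markov3 :: "('a::finite \<Rightarrow> 'b::finite \<Rightarrow> 'c::finite \<Rightarrow> real) \<Rightarrow> bool" where
  "markov3 P \<longleftrightarrow> (\<forall>a b c.
      P a b c * (\<Sum>a'\<in>UNIV. \<Sum>c'\<in>UNIV. P a' b c') = (\<Sum>c'\<in>UNIV. P a b c') * (\<Sum>a'\<in>UNIV. P a' b c))"

end

theory Submission
  imports Defs
begin

definition nrm :: "('a::finite \<Rightarrow> real) \<Rightarrow> 'a \<Rightarrow> real" where
  "nrm v = (\<lambda>x. v x / (\<Sum>x'\<in>UNIV. v x'))"

lemma nrm_scale:
  assumes "c \<noteq> (0::real)"
  shows "nrm (\<lambda>x. c * v x) = nrm v"
  using assms by (auto simp: nrm_def fun_eq_iff sum_distrib_left[symmetric])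

lemma link:
  fixes W :: "'x::finite \<Rightarrow> 'y \<Rightarrow> 'z \<Rightarrow> real"
  assumes k: "\<forall>x. W x y z * qv = Fv * r x" and nz: "W x0 y z * qv \<noteq> 0"
  shows "nrm (\<lambda>x. W x y z) = nrm r \<and> r \<noteq> (\<lambda>x. 0)"
proof -
  have qv: "qv \<noteq> 0" using nz by auto
  have Fv: "Fv \<noteq> 0" using nz k by auto
  have r0: "r x0 \<noteq> 0" using nz k by (metis mult_zero_right)
  have "(\<lambda>x. W x y z) = (\<lambda>x. (Fv / qv) * r x)"
  proof
    fix x show "W x y z = Fv / qv * r x" using k qv by (simp add: field_simps)
  qed
  then have "nrm (\<lambda>x. W x y z) = nrm r" using nrm_scale[of "Fv/qv" r] Fv qv by simp
  moreover have "r \<noteq> (\<lambda>x. 0)" using r0 by auto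
  ultimately show ?thesis by simp
qed

lemma equiv_z: "equiv (Zsupp W y) (zequiv W y)"
proof (rule equivI)
  show "zequiv W y \<subseteq> Zsupp W y \<times> Zsupp W y"
    unfolding zequiv_def by auto
  show "refl_on (Zsupp W y) (zequiv W y)"
    unfolding refl_on_def zequiv_def by (auto intro: exI[of _ 1])
  show "sym (zequiv W y)" unfolding sym_def
  proof (intro allI impI)
    fix a b assume "(a, b) \<in> zequiv W y"
    then obtain c where c: "a \<in> Zsupp W y" "b \<in> Zsupp W y" "c > 0" "\<forall>x. W x y a = c * W x y b"
      by (auto simp: zequiv_def)
    then show "(b, a) \<in> zequiv W y" unfolding zequiv_def by (auto intro!: exI[of _ "1/c"])
  qed
  show "trans (zequiv W y)" unfolding trans_def
  proof (intro allI impI)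
    fix a b e assume ab: "(a, b) \<in> zequiv W y" and be: "(b, e) \<in> zequiv W y"
    obtain c where c: "a \<in> Zsupp W y" "c > 0" "\<forall>x. W x y a = c * W x y b"
      using ab by (auto simp: zequiv_def)
    obtain d where d: "e \<in> Zsupp W y" "d > 0" "\<forall>x. W x y b = d * W x y e"
      using be by (auto simp: zequiv_def)
    from c d show "(a, e) \<in> zequiv W y" unfolding zequiv_def by (auto intro!: exI[of _ "c*d"])
  qed
qed

lemma sum_pos_col:
  fixes W :: "'x::finite \<Rightarrow> 'y \<Rightarrow> 'z::finite \<Rightarrow> real"
  assumes nn: "\<forall>x y z. W x y z \<ge> 0" and z: "z \<in> Zsupp W y"
  shows "(\<Sum>x\<in>UNIV. W x y z) > 0"
proof -
  obtain x0 where "W x0 y z > 0" using z by (auto simp: Zsupp_def)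
  then show ?thesis by (intro sum_pos2[of UNIV x0]) (auto simp: nn)
qed

lemma alpha_class:
  fixes W :: "'x::finite \<Rightarrow> 'y \<Rightarrow> 'z::finite \<Rightarrow> real"
  assumes nn: "\<forall>x y z. W x y z \<ge> 0" and z: "z \<in> Zsupp W y"
  shows "alpha_of W y (zequiv W y `` {z}) = nrm (\<lambda>x. W x y z)"
proof -
  define s where "s = (\<Sum>x\<in>UNIV. W x y z)"
  have s: "s > 0" using sum_pos_col[OF nn z] s_def by simp
  have zin: "z \<in> zequiv W y `` {z}"
    using equiv_z[of W y] z by (meson equiv_class_self)
  show ?thesis unfolding alpha_of_def
  proof (rule the_equality)
    show "prob_vec (nrm (\<lambda>x. W x y z)) \<and>
      (\<exists>g. \<forall>x. \<forall>z'\<in>zequiv W y `` {z}. W x y z' = nrm (\<lambda>x. W x y z) x * g z')"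
    proof
      show "prob_vec (nrm (\<lambda>x. W x y z))"
        unfolding prob_vec_def nrm_def using s s_def nn
        by (auto simp: sum_divide_distrib[symmetric])
      show "\<exists>g. \<forall>x. \<forall>z'\<in>zequiv W y `` {z}. W x y z' = nrm (\<lambda>x. W x y z) x * g z'"
      proof (intro exI[of _ "\<lambda>z'. (\<Sum>x\<in>UNIV. W x y z')"] allI ballI)
        fix x z' assume "z' \<in> zequiv W y `` {z}"
        then obtain c where c: "c > 0" "\<forall>x. W x y z = c * W x y z'"
          by (auto simp: zequiv_def)
        have hs: "s = c * (\<Sum>x\<in>UNIV. W x y z')"
          using c unfolding s_def by (simp add: sum_distrib_left)
        then have h0: "(\<Sum>x\<in>UNIV. W x y z') \<noteq> 0" using s by auto
        have "W x y z' = W x y z / s * (\<Sum>x\<in>UNIV. W x y z')"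
          using c hs h0 by (simp add: field_simps)
        then show "W x y z' = nrm (\<lambda>x. W x y z) x * (\<Sum>x\<in>UNIV. W x y z')"
          unfolding nrm_def s_def by simp
      qed
    qed
  next
    fix a assume a: "prob_vec a \<and> (\<exists>g. \<forall>x. \<forall>z'\<in>zequiv W y `` {z}. W x y z' = a x * g z')"
    then obtain g where g: "\<forall>x. W x y z = a x * g z" using zin by blast
    have "s = g z" using a g unfolding s_def prob_vec_def
      by (simp add: sum_distrib_right[symmetric])
    then show "a = nrm (\<lambda>x. W x y z)"
      unfolding nrm_def using g s s_def by (auto simp: fun_eq_iff)
  qed
qed

lemma nrm_eq_equiv:
  fixes W :: "'x::finite \<Rightarrow> 'y \<Rightarrow> 'z::finite \<Rightarrow> real"
  assumes nn: "\<forall>x y z. W x y z \<ge> 0" and z: "z \<in> Zsupp W y" and z': "z' \<in> Zsupp W y"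
    and e: "nrm (\<lambda>x. W x y z) = nrm (\<lambda>x. W x y z')"
  shows "(z, z') \<in> zequiv W y"
proof -
  define s where "s = (\<Sum>x\<in>UNIV. W x y z)"
  define s' where "s' = (\<Sum>x\<in>UNIV. W x y z')"
  have s: "s > 0" using sum_pos_col[OF nn z] s_def by simp
  have s': "s' > 0" using sum_pos_col[OF nn z'] s'_def by simp
  have "\<forall>x. W x y z = (s/s') * W x y z'"
  proof
    fix x
    have "W x y z / s = W x y z' / s'" using e unfolding nrm_def s_def s'_def by metis
    then show "W x y z = (s/s') * W x y z'" using s s' by (simp add: field_simps)
  qed
  then show ?thesis unfolding zequiv_def using z z' s s'
    by (intro CollectI case_prodI conjI exI[of _ "s/s'"]) auto
qed

lemma main:
  fixes W :: "'x::finite \<Rightarrow> 'y \<Rightarrow> 'z::finite \<Rightarrow> real"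
    and q :: "'u \<Rightarrow> 'y \<Rightarrow> 'z \<Rightarrow> real" and r :: "'u \<Rightarrow> 'x \<Rightarrow> real"
  assumes nn: "\<forall>x y z. W x y z \<ge> 0"
    and qnn: "\<forall>u y z. q u y z \<ge> 0"
    and key: "\<forall>u y x z. W x y z * q u y z = F u y z * r u x"
    and rsum: "\<forall>u x y. (\<Sum>z\<in>UNIV. W x y z * q u y z) = r u x"
    and hasu: "\<forall>y z. z \<in> Zsupp W y \<longrightarrow> (\<exists>u. q u y z > 0)"
  shows "alphas W y = {nrm (r u) | u. r u \<noteq> (\<lambda>x. 0)}"
    and "kcount W y = card {nrm (r u) | u. r u \<noteq> (\<lambda>x. 0)}"
proof -
  have eqv: "equiv (Zsupp W y) (zequiv W y)" by (rule equiv_z)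
  show A: "alphas W y = {nrm (r u) | u. r u \<noteq> (\<lambda>x. 0)}"
  proof
    show "alphas W y \<subseteq> {nrm (r u) | u. r u \<noteq> (\<lambda>x. 0)}"
    proof
      fix a assume "a \<in> alphas W y"
      then obtain C where C: "C \<in> zclasses W y" "a = alpha_of W y C"
        by (auto simp: alphas_def)
      then obtain z where z: "z \<in> Zsupp W y" "C = zequiv W y `` {z}"
        by (auto simp: zclasses_def elim: quotientE)
      have a: "a = nrm (\<lambda>x. W x y z)" using C z alpha_class[OF nn] by simp
      obtain x0 where x0: "W x0 y z > 0" using z by (auto simp: Zsupp_def)
      obtain u where u: "q u y z > 0" using hasu z by blast
      have "nrm (\<lambda>x. W x y z) = nrm (r u) \<and> r u \<noteq> (\<lambda>x. 0)"
      proof (rule link)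
        show "\<forall>x. W x y z * q u y z = F u y z * r u x" using key by blast
        show "W x0 y z * q u y z \<noteq> 0" using x0 u by simp
      qed
      then show "a \<in> {nrm (r u) | u. r u \<noteq> (\<lambda>x. 0)}" using a by auto
    qed
    show "{nrm (r u) | u. r u \<noteq> (\<lambda>x. 0)} \<subseteq> alphas W y"
    proof
      fix a assume "a \<in> {nrm (r u) | u. r u \<noteq> (\<lambda>x. 0)}"
      then obtain u where u: "a = nrm (r u)" "r u \<noteq> (\<lambda>x. 0)" by auto
      then obtain x0 where x0: "r u x0 \<noteq> 0" by auto
      then have "(\<Sum>z\<in>UNIV. W x0 y z * q u y z) \<noteq> 0" using rsum by simp
      then obtain z where zz: "W x0 y z * q u y z \<noteq> 0" by (meson sum.neutral)
      have zs: "z \<in> Zsupp W y" using zz nn unfolding Zsupp_def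
        by (metis less_eq_real_def mult_zero_left mem_Collect_eq)
      have "nrm (\<lambda>x. W x y z) = nrm (r u) \<and> r u \<noteq> (\<lambda>x. 0)"
      proof (rule link)
        show "\<forall>x. W x y z * q u y z = F u y z * r u x" using key by blast
        show "W x0 y z * q u y z \<noteq> 0" using zz by simp
      qed
      then have "a = alpha_of W y (zequiv W y `` {z})" using u alpha_class[OF nn zs] by simp
      moreover have "zequiv W y `` {z} \<in> zclasses W y"
        using zs by (auto simp: zclasses_def intro: quotientI)
      ultimately show "a \<in> alphas W y" by (auto simp: alphas_def)
    qed
  qed
  have inj: "inj_on (alpha_of W y) (zclasses W y)"
  proof
    fix C1 C2 assume C1: "C1 \<in> zclasses W y" and C2: "C2 \<in> zclasses W y"
      and e: "alpha_of W y C1 = alpha_of W y C2"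
    obtain z1 where z1: "z1 \<in> Zsupp W y" "C1 = zequiv W y `` {z1}"
      using C1 by (auto simp: zclasses_def elim: quotientE)
    obtain z2 where z2: "z2 \<in> Zsupp W y" "C2 = zequiv W y `` {z2}"
      using C2 by (auto simp: zclasses_def elim: quotientE)
    have "nrm (\<lambda>x. W x y z1) = nrm (\<lambda>x. W x y z2)"
      using e z1 z2 alpha_class[OF nn] by simp
    then have "(z1, z2) \<in> zequiv W y" by (rule nrm_eq_equiv[OF nn z1(1) z2(1)])
    then show "C1 = C2" using z1 z2 eqv by (simp add: equiv_class_eq)
  qed
  show "kcount W y = card {nrm (r u) | u. r u \<noteq> (\<lambda>x. 0)}"
    using card_image[OF inj] A unfolding kcount_def alphas_def by simp
qed


theorem claim2:
  fixes pXY :: "'x::finite \<Rightarrow> 'y::finite \<Rightarrow> real"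
    and W :: "'x \<Rightarrow> 'y \<Rightarrow> 'z::finite \<Rightarrow> real"
    and Q :: "'x \<Rightarrow> 'y \<Rightarrow> 'z \<Rightarrow> 'u::finite \<Rightarrow> real"
  assumes pXY_pos: "\<forall>x y. pXY x y > 0"
    and pXY_sum: "(\<Sum>x\<in>UNIV. \<Sum>y\<in>UNIV. pXY x y) = 1"
    and W_nonneg: "\<forall>x y z. W x y z \<ge> 0"
    and W_sum: "\<forall>x y. (\<Sum>z\<in>UNIV. W x y z) = 1"
    and Q_nonneg: "\<forall>x y z u. Q x y z u \<ge> 0"
    and Q_sum: "\<forall>x y z. (\<Sum>u\<in>UNIV. Q x y z u) = 1"
    and M1: "markov3 (\<lambda>u x y. \<Sum>z\<in>UNIV. joint pXY W Q u x y z)"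
    and M2: "markov3 (\<lambda>z (u, y) x. joint pXY W Q u x y z)"
    and M3: "markov3 (\<lambda>u (y, z) x. joint pXY W Q u x y z)"
  shows "\<forall>y y'. kcount W y = kcount W y' \<and> alphas W y = alphas W y'"
proof -
  have pp: "\<And>x y. pXY x y > 0" using pXY_pos by blast
  have Wn: "\<And>x y z. W x y z \<ge> 0" using W_nonneg by blast
  have Qn: "\<And>x y z u. Q x y z u \<ge> 0" using Q_nonneg by blast
  have jd: "\<And>u x y z. joint pXY W Q u x y z = pXY x y * W x y z * Q x y z u"
    by (simp add: joint_def)
  have sQ: "(\<Sum>u\<in>UNIV. pXY x y * W x y z * Q x y z u) = pXY x y * W x y z" for x y z
    using Q_sum by (simp add: sum_distrib_left[symmetric])
  define T where "T y z = (\<Sum>x\<in>UNIV. pXY x y * W x y z)" for y z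
  define q where "q u y z = (\<Sum>x\<in>UNIV. pXY x y * W x y z * Q x y z u) / T y z" for u y z
  have m3: "pXY x y * W x y z * Q x y z u * (\<Sum>u'\<in>UNIV. \<Sum>x'\<in>UNIV. pXY x' y * W x' y z * Q x' y z u')
     = (\<Sum>x'\<in>UNIV. pXY x' y * W x' y z * Q x' y z u) * (\<Sum>u'\<in>UNIV. pXY x y * W x y z * Q x y z u')"
    for u x y z
    using M3[unfolded markov3_def, THEN spec[of _ u], THEN spec[of _ "(y,z)"], THEN spec[of _ x]] by (simp only: jd prod.case)
  have qeq: "pXY x y * W x y z * Q x y z u = pXY x y * W x y z * q u y z" for u x y z
  proof (cases "W x y z = 0")
    case True then show ?thesis by simp
  next
    case False
    then have Wp: "W x y z > 0" using Wn[of x y z] by linarith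
    have pw: "pXY x y * W x y z > 0" using Wp pp[of x y] by simp
    have "pXY x y * W x y z \<le> T y z" unfolding T_def
      by (rule member_le_sum[where f="\<lambda>x. pXY x y * W x y z"]) (auto intro: mult_nonneg_nonneg less_imp_le pp Wn)
    then have Tp: "T y z > 0" using pw by linarith
    have sw: "(\<Sum>u'\<in>UNIV. \<Sum>x'\<in>UNIV. pXY x' y * W x' y z * Q x' y z u') = T y z"
      unfolding T_def by (subst sum.swap) (simp add: sQ)
    from m3[of x y z u] sw sQ[of x y z]
    have "pXY x y * W x y z * Q x y z u * T y z
        = (\<Sum>x'\<in>UNIV. pXY x' y * W x' y z * Q x' y z u) * (pXY x y * W x y z)" by simp
    then show ?thesis using Tp pw unfolding q_def by (simp add: field_simps)
  qed
  have qQ: "q u y z = Q x y z u" if "W x y z > 0" for u x y z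
    using qeq[of x y z u] pp[of x y] that by simp
  have qnn1: "q u y z \<ge> 0" for u y z
    unfolding q_def T_def
    by (rule divide_nonneg_nonneg; rule sum_nonneg; simp add: Wn Qn less_imp_le[OF pp])
  have qnn: "\<forall>u y z. q u y z \<ge> 0" using qnn1 by blast
  have hasu: "\<forall>y z. z \<in> Zsupp W y \<longrightarrow> (\<exists>u. q u y z > 0)"
  proof (intro allI impI)
    fix y z assume "z \<in> Zsupp W y"
    then obtain x0 where x0: "W x0 y z > 0" by (auto simp: Zsupp_def)
    have "\<exists>u. Q x0 y z u > 0"
    proof (rule ccontr)
      assume "\<not> (\<exists>u. Q x0 y z u > 0)"
      then have "\<forall>u. Q x0 y z u = 0" using Qn by (metis less_eq_real_def)
      then have "(\<Sum>u\<in>UNIV. Q x0 y z u) = 0" by simp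
      then show False using Q_sum by simp
    qed
    then show "\<exists>u. q u y z > 0" using qQ[OF x0] by auto
  qed
  have Jfun: "joint pXY W Q = (\<lambda>u x y z. pXY x y * W x y z * q u y z)"
    by (intro ext) (simp add: jd qeq)
  have sq: "(\<Sum>u\<in>UNIV. pXY x y * W x y z * q u y z) = pXY x y * W x y z" for x y z
  proof -
    have "(\<Sum>u\<in>UNIV. pXY x y * W x y z * q u y z) = (\<Sum>u\<in>UNIV. pXY x y * W x y z * Q x y z u)"
      by (rule sum.cong[OF refl]) (simp add: qeq)
    then show ?thesis using sQ by simp
  qed
  have Lz: "(\<Sum>z\<in>UNIV. pXY x y * W x y z * q u y z) = pXY x y * (\<Sum>z\<in>UNIV. W x y z * q u y z)"
    for x y u by (simp add: sum_distrib_left mult.assoc)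
  define r where "r u x = (\<Sum>y'\<in>UNIV. \<Sum>z\<in>UNIV. pXY x y' * W x y' z * q u y' z) / (\<Sum>y'\<in>UNIV. pXY x y')"
    for u x
  have m1: "(\<Sum>z\<in>UNIV. pXY x y * W x y z * q u y z) *
      (\<Sum>u'\<in>UNIV. \<Sum>y'\<in>UNIV. \<Sum>z\<in>UNIV. pXY x y' * W x y' z * q u' y' z)
    = (\<Sum>y'\<in>UNIV. \<Sum>z\<in>UNIV. pXY x y' * W x y' z * q u y' z) *
      (\<Sum>u'\<in>UNIV. \<Sum>z\<in>UNIV. pXY x y * W x y z * q u' y z)" for u x y
    using M1[unfolded markov3_def Jfun, THEN spec[of _ u], THEN spec[of _ x], THEN spec[of _ y]] by (simp only: prod.case)
  have pm: "(\<Sum>u'\<in>UNIV. \<Sum>z\<in>UNIV. pXY x y * W x y z * q u' y z) = pXY x y" for x y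
  proof -
    have "(\<Sum>u'\<in>UNIV. \<Sum>z\<in>UNIV. pXY x y * W x y z * q u' y z)
        = (\<Sum>z\<in>UNIV. pXY x y * W x y z)" by (subst sum.swap) (simp add: sq)
    also have "\<dots> = pXY x y" using W_sum by (simp add: sum_distrib_left[symmetric])
    finally show ?thesis .
  qed
  have pmm: "(\<Sum>u'\<in>UNIV. \<Sum>y'\<in>UNIV. \<Sum>z\<in>UNIV. pXY x y' * W x y' z * q u' y' z)
      = (\<Sum>y'\<in>UNIV. pXY x y')" for x
    by (subst sum.swap) (simp add: pm)
  have pxp: "(\<Sum>y'\<in>UNIV. pXY x y') > 0" for x
    by (rule sum_pos) (auto intro: pp)
  have rsum: "\<forall>u x y. (\<Sum>z\<in>UNIV. W x y z * q u y z) = r u x"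
  proof (intro allI)
    fix u x y
    have "pXY x y * (\<Sum>z\<in>UNIV. W x y z * q u y z) * (\<Sum>y'\<in>UNIV. pXY x y')
       = (\<Sum>y'\<in>UNIV. \<Sum>z\<in>UNIV. pXY x y' * W x y' z * q u y' z) * pXY x y"
      using m1[of x y u] unfolding pm[of x y] pmm[of x] Lz[of x y u] .
    then show "(\<Sum>z\<in>UNIV. W x y z * q u y z) = r u x"
      unfolding r_def using pxp[of x] pp[of x y] by (simp add: field_simps)
  qed
  have rnn: "r u x \<ge> 0" for u x
  proof -
    have "r u x = (\<Sum>z\<in>UNIV. W x undefined z * q u undefined z)" using rsum by simp
    also have "\<dots> \<ge> 0" by (rule sum_nonneg) (simp add: Wn qnn1)
    finally show ?thesis .
  qed
  have m2: "pXY x y * W x y z * q u y z * (\<Sum>z'\<in>UNIV. \<Sum>x'\<in>UNIV. pXY x' y * W x' y z' * q u y z')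
     = (\<Sum>x'\<in>UNIV. pXY x' y * W x' y z * q u y z) * (\<Sum>z'\<in>UNIV. pXY x y * W x y z' * q u y z')"
    for u x y z
    using M2[unfolded markov3_def Jfun, THEN spec[of _ z], THEN spec[of _ "(u,y)"], THEN spec[of _ x]] by (simp only: prod.case)
  define F where "F u y z = (\<Sum>x'\<in>UNIV. pXY x' y * W x' y z * q u y z) / (\<Sum>x'\<in>UNIV. pXY x' y * r u x')"
    for u y z
  have key: "\<forall>u y x z. W x y z * q u y z = F u y z * r u x"
  proof (intro allI)
    fix u y x z
    have Lr: "(\<Sum>z'\<in>UNIV. pXY x' y * W x' y z' * q u y z') = pXY x' y * r u x'" for x'
      using Lz[of x' y u] rsum by simp
    have D: "(\<Sum>z'\<in>UNIV. \<Sum>x'\<in>UNIV. pXY x' y * W x' y z' * q u y z') = (\<Sum>x'\<in>UNIV. pXY x' y * r u x')"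
      by (subst sum.swap) (simp add: Lr)
    show "W x y z * q u y z = F u y z * r u x"
    proof (cases "(\<Sum>x'\<in>UNIV. pXY x' y * r u x') = 0")
      case True
      then have "\<forall>x'\<in>UNIV. pXY x' y * r u x' = 0"
        using sum_nonneg_eq_0_iff[of UNIV "\<lambda>x'. pXY x' y * r u x'"] pp rnn
        by (simp add: less_imp_le)
      then have r0: "r u x = 0" using pp[of x y] by (metis UNIV_I less_irrefl mult_eq_0_iff)
      then have "(\<Sum>z\<in>UNIV. W x y z * q u y z) = 0" using rsum by simp
      then have "\<forall>z\<in>UNIV. W x y z * q u y z = 0"
        using sum_nonneg_eq_0_iff[of UNIV "\<lambda>z. W x y z * q u y z"] Wn qnn by simp
      then show ?thesis using r0 by simp
    next
      case False
      from m2[of x y z u] D Lr[of x]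
      have "pXY x y * W x y z * q u y z * (\<Sum>x'\<in>UNIV. pXY x' y * r u x')
         = (\<Sum>x'\<in>UNIV. pXY x' y * W x' y z * q u y z) * (pXY x y * r u x)" by simp
      then show ?thesis unfolding F_def using False pp[of x y] by (simp add: field_simps)
    qed
  qed
  note A = main(1)[OF W_nonneg qnn key rsum hasu]
  note K = main(2)[OF W_nonneg qnn key rsum hasu]
  show ?thesis using A K by simp
qed

end
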